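(* There is a constant $C$ such that for every $n\ge1$ there is a distribution $D$ on $\mathbb{R}_{\ge0}$ such that, when $v_1,\dots,v_n$ are i.i.d. with distribution $D$ (arriving in any order, in particular uniformly random order), every fixed-threshold algorithm (any threshold $\tau$ and any tie probability $\theta\in[0,1]$) has expected value at most $(1-1/e+C/n)\,\mathbb{E}[\max_iv_i]$. One such $D$ takes value $n/(e-1)$ with probability $1/n^2$ and value $(e-2)/(e-1)$ otherwise.
   Context: A fixed-threshold algorithm with threshold $\tau$ and tie probability $\theta$ observes the values in arrival order and gives the (single) item to the first buyer whose value exceeds $\tau$, or equals $\tau$ and wins an independent coin of bias $\theta$; its value is that buyer's value ($0$ if none). *)

theory Defs
  imports "HOL-Probability.Probability"
begin

text \<open>i.i.d. list of length n drawn from p (entry i = i-th arrival).\<close>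
fun iid_list_pmf :: "nat \<Rightarrow> 'a pmf \<Rightarrow> 'a list pmf" where
  "iid_list_pmf 0 p = return_pmf []"
| "iid_list_pmf (Suc n) p = bind_pmf p (\<lambda>x. map_pmf (\<lambda>xs. x # xs) (iid_list_pmf n p))"

fun fta :: "real \<Rightarrow> (real \<times> bool) list \<Rightarrow> real" where
  "fta \<tau> [] = 0"
| "fta \<tau> ((v, c) # rest) = (if \<tau> < v \<or> (v = \<tau> \<and> c) then v else fta \<tau> rest)"

definition sample_pmf :: "nat \<Rightarrow> real pmf \<Rightarrow> real \<Rightarrow> (real \<times> bool) list pmf" where
  "sample_pmf n D \<theta> = iid_list_pmf n (pair_pmf D (bernoulli_pmf \<theta>))"

definition fta_value :: "nat \<Rightarrow> real pmf \<Rightarrow> real \<Rightarrow> real \<Rightarrow> real" where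
  "fta_value n D \<tau> \<theta> = measure_pmf.expectation (sample_pmf n D \<theta>) (fta \<tau>)"

definition exp_max :: "nat \<Rightarrow> real pmf \<Rightarrow> real" where
  "exp_max n D = measure_pmf.expectation (iid_list_pmf n D) (\<lambda>vs. Max (set vs))"

definition hard_dist :: "nat \<Rightarrow> real pmf" where
  "hard_dist n = map_pmf (\<lambda>b. if b then real n / (exp 1 - 1) else (exp 1 - 2) / (exp 1 - 1))
                   (bernoulli_pmf (1 / (real n)^2))"

end

theory Submission
  imports Defs "HOL-Analysis.Complex_Transcendental"
begin


lemma e_bounds: "2.718 < exp (1::real)" "exp (1::real) < 2.7183"
  using e_approx_32 by (auto simp: abs_if split: if_split_asm)

definition "Gf y = exp(-y)*(1+(exp 1 - 2)*y) + y/exp 1 - (1::real)"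
definition "psi y = 1/exp 1 - exp(-y)*(1 - (exp 1 - 2) + (exp 1 - 2)*y :: real)"

lemma G_deriv: "DERIV Gf y :> psi y"
  unfolding Gf_def psi_def
  by (auto intro!: derivative_eq_intros simp: algebra_simps)

lemma psi_deriv: "DERIV psi y :> exp(-y)*(1 - 2*(exp 1 - 2) + (exp 1 - 2)*y)"
  unfolding psi_def
  by (auto intro!: derivative_eq_intros simp: algebra_simps)

lemma psi1: "psi 1 = 0" unfolding psi_def by (simp add: exp_minus field_simps)
lemma G0: "Gf 0 = 0" unfolding Gf_def by simp
lemma G1: "Gf 1 = 0" unfolding Gf_def by (simp add: exp_minus field_simps)
lemma psi0: "psi 0 > 0"
proof -
  have "(1/2.7183::real) < 1/exp 1" using e_bounds by (intro divide_strict_left_mono) auto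
  then show ?thesis unfolding psi_def using e_bounds by simp
qed

definition "y0 = (2*(exp 1 - 2) - 1) / (exp 1 - (2::real))"

lemma y0_bounds: "0 < y0" "y0 < 1"
  unfolding y0_def using e_bounds by (auto simp: field_simps)

lemma psi_sign: assumes "y0 \<le> x" shows "0 \<le> exp(-x)*(1 - 2*(exp 1 - 2) + (exp 1 - 2)*x)"
proof -
  have "0 < exp 1 - (2::real)" using e_bounds by simp
  then have "2*(exp 1 - 2) - 1 \<le> (exp 1 - 2) * x" using assms unfolding y0_def
    by (simp add: divide_le_eq mult.commute)
  then show ?thesis by simp
qed

lemma psi_sign2: assumes "x \<le> y0" shows "exp(-x)*(1 - 2*(exp 1 - 2) + (exp 1 - 2)*x) \<le> 0"
proof -
  have "0 < exp 1 - (2::real)" using e_bounds by simp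
  then have "(exp 1 - 2) * x \<le> 2*(exp 1 - 2) - 1" using assms unfolding y0_def
    by (simp add: le_divide_eq mult.commute)
  then show ?thesis by (simp add: mult_nonneg_nonpos)
qed

lemma psi_mono: "y0 \<le> a \<Longrightarrow> a \<le> b \<Longrightarrow> psi a \<le> psi b"
  by (rule DERIV_nonneg_imp_nondecreasing[of a b psi]) (auto intro!: psi_deriv psi_sign)

lemma psi_anti: "a \<le> b \<Longrightarrow> b \<le> y0 \<Longrightarrow> psi b \<le> psi a"
  by (rule DERIV_nonpos_imp_nonincreasing[of a b psi]) (auto intro!: psi_deriv psi_sign2)

lemma G_right: assumes "y0 \<le> y" shows "0 \<le> Gf y"
proof (cases "y \<le> 1")
  case True
  have "Gf 1 \<le> Gf y"
    by (rule DERIV_nonpos_imp_nonincreasing[of y 1 Gf]) 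
       (use True assms psi_mono[of _ 1] psi1 in \<open>auto intro!: G_deriv\<close>)
  then show ?thesis using G1 by simp
next
  case False
  have "Gf 1 \<le> Gf y"
    by (rule DERIV_nonneg_imp_nondecreasing[of 1 y Gf]) 
       (use False y0_bounds psi_mono[of 1] psi1 in \<open>auto intro!: G_deriv\<close>)
  then show ?thesis using G1 by simp
qed

lemma G_nonneg: assumes "0 \<le> y" shows "0 \<le> Gf y"
proof (cases "y0 \<le> y")
  case True then show ?thesis by (rule G_right)
next
  case False
  show ?thesis
  proof (cases "psi y \<ge> 0")
    case True
    have yy: "y \<le> y0" using False by simp
    have "Gf 0 \<le> Gf y"
    proof (rule DERIV_nonneg_imp_nondecreasing[of 0 y Gf], use assms in simp, intro allI impI exI conjI)
      fix x assume x: "0 \<le> x" "x \<le> y"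
      show "DERIV Gf x :> psi x" by (rule G_deriv)
      show "0 \<le> psi x" using psi_anti[of x y] x yy True by simp
    qed
    then show ?thesis using G0 by simp
  next
    case neg: False
    have "Gf y0 \<le> Gf y"
    proof (rule DERIV_nonpos_imp_nonincreasing[of y y0 Gf], use False in simp, intro allI impI exI conjI)
      fix x assume x: "y \<le> x" "x \<le> y0"
      show "DERIV Gf x :> psi x" by (rule G_deriv)
      show "psi x \<le> 0" using psi_anti[of y x] x neg by simp
    qed
    then show ?thesis using G_right[of y0] by simp
  qed
qed



lemma set_iid: "set_pmf (iid_list_pmf n p) \<subseteq> {xs. set xs \<subseteq> set_pmf p \<and> length xs = n}"
  by (induction n) fastforce+

lemma finite_iid: "finite (set_pmf p) \<Longrightarrow> finite (set_pmf (iid_list_pmf n p))"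
  by (rule finite_subset[OF set_iid finite_lists_length_eq])

lemma exp_bind:
  fixes f :: "'b \<Rightarrow> real"
  assumes "finite (set_pmf p)" "\<And>x. x \<in> set_pmf p \<Longrightarrow> finite (set_pmf (N x))"
  shows "measure_pmf.expectation (bind_pmf p N) f = measure_pmf.expectation p (\<lambda>x. measure_pmf.expectation (N x) f)"
  apply (subst pmf_expectation_bind[OF assms(1) assms(2) order_refl])
   apply simp
  apply (subst integral_measure_pmf_real[OF assms(1)])
   apply simp
  apply (simp add: mult.commute)
  done

lemma exp_iid_Suc:
  fixes f :: "'a list \<Rightarrow> real"
  assumes "finite (set_pmf p)"
  shows "measure_pmf.expectation (iid_list_pmf (Suc n) p) f =
    measure_pmf.expectation p (\<lambda>x. measure_pmf.expectation (iid_list_pmf n p) (\<lambda>xs. f (x # xs)))"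
  using assms by (simp add: exp_bind finite_iid)

definition acc :: "real \<Rightarrow> real \<times> bool \<Rightarrow> bool" where
  "acc \<tau> x = (\<tau> < fst x \<or> (fst x = \<tau> \<and> snd x))"

lemma fta_Cons: "fta \<tau> (x # xs) = (if acc \<tau> x then fst x else fta \<tau> xs)"
  by (cases x) (simp add: acc_def)

lemma fta_exp:
  assumes fin: "finite (set_pmf q)"
  shows "measure_pmf.expectation (iid_list_pmf n q) (fta \<tau>) =
     measure_pmf.expectation q (\<lambda>x. if acc \<tau> x then fst x else 0) *
     (\<Sum>i<n. (1 - measure_pmf.expectation q (\<lambda>x. if acc \<tau> x then 1 else 0)) ^ i)"
proof (induction n)
  case 0 then show ?case by simp
next
  case (Suc n)
  define A where "A = measure_pmf.expectation q (\<lambda>x. if acc \<tau> x then fst x else 0)"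
  define s where "s = measure_pmf.expectation q (\<lambda>x. if acc \<tau> x then 1 else (0::real))"
  define K where "K = measure_pmf.expectation (iid_list_pmf n q) (fta \<tau>)"
  have int: "integrable (measure_pmf q) g" for g :: "real \<times> bool \<Rightarrow> real"
    using fin by (rule integrable_measure_pmf_finite)
  have "measure_pmf.expectation (iid_list_pmf (Suc n) q) (fta \<tau>) =
      measure_pmf.expectation q (\<lambda>x. if acc \<tau> x then fst x else K)"
    unfolding exp_iid_Suc[OF fin] fta_Cons K_def
    by (intro Bochner_Integration.integral_cong refl) auto
  also have "\<dots> = measure_pmf.expectation q (\<lambda>x. (if acc \<tau> x then fst x else 0) + K * (1 - (if acc \<tau> x then 1 else 0)))"
    by (intro Bochner_Integration.integral_cong refl) auto
  also have "\<dots> = A + K * (1 - s)"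
    unfolding A_def s_def
    by (simp add: int Bochner_Integration.integral_add Bochner_Integration.integral_diff)
  also have "\<dots> = A * (\<Sum>i<Suc n. (1 - s) ^ i)"
  proof -
    have h1: "(\<Sum>i<Suc n. (1 - s) ^ i) = 1 + (1 - s) * (\<Sum>i<n. (1 - s) ^ i)"
      by (subst sum.lessThan_Suc_shift) (simp add: sum_distrib_left del: sum.lessThan_Suc)
    have h2: "K = A * (\<Sum>i<n. (1 - s) ^ i)"
      using Suc.IH unfolding A_def[symmetric] s_def[symmetric] K_def[symmetric] .
    show ?thesis unfolding h1 h2 by algebra
  qed
  finally show ?case unfolding A_def s_def .
qed



lemma pow_lower: assumes "0 \<le> s" "s \<le> 1" shows "exp (- (real n * s)) * (1 - real n * s^2) \<le> (1 - s) ^ n"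
proof -
  have 1: "exp (-s) * (1 - s^2) \<le> 1 - s"
  proof -
    have "1 + s \<le> exp s" by (rule exp_ge_add_one_self)
    then have "(1 - s) * (1 + s) \<le> (1 - s) * exp s" using assms by (intro mult_left_mono) auto
    then have "(1 - s^2) \<le> (1 - s) * exp s" by (simp add: power2_eq_square algebra_simps)
    then have "exp (-s) * (1 - s^2) \<le> exp (-s) * ((1 - s) * exp s)" by (intro mult_left_mono) auto
    also have "\<dots> = 1 - s" by (simp add: exp_minus field_simps)
    finally show ?thesis .
  qed
  have 2: "1 - real n * s^2 \<le> (1 - s^2)^n"
    using Bernoulli_inequality[of "- (s^2)" n] assms by (simp add: power_le_one)
  have "exp (- (real n * s)) * (1 - real n * s^2) \<le> exp (-s)^n * (1 - s^2)^n"
  proof -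
    have "exp (-s)^n = exp (- (real n * s))" by (simp add: exp_of_nat_mult[symmetric])
    then show ?thesis by (simp add: mult_left_mono[OF 2])
  qed
  also have "\<dots> = (exp (-s) * (1 - s^2))^n" by (simp add: power_mult_distrib)
  also have "\<dots> \<le> (1 - s)^n"
    by (rule power_mono[OF 1]) (use assms in \<open>auto intro: mult_nonneg_nonneg simp: power_le_one\<close>)
  finally show ?thesis .
qed

lemma exp_ge_e_mult: "exp 1 * x \<le> exp (x::real)"
proof -
  have "exp 1 * (1 + (x - 1)) \<le> exp 1 * exp (x - 1)"
    by (intro mult_left_mono exp_ge_add_one_self) auto
  then show ?thesis by (simp add: exp_diff)
qed

lemma y_exp: fixes y :: real assumes "0 \<le> y" shows "y * exp (-y) \<le> 1" "y^2 * exp (-y) \<le> 1"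
proof -
  have "y \<le> exp y" using exp_ge_add_one_self[of y] by linarith
  then show "y * exp (-y) \<le> 1" by (simp add: exp_minus field_simps)
  have a: "exp 1 * (y/2) \<le> exp (y/2)" by (rule exp_ge_e_mult)
  have "2 * y \<le> exp 1 * y" by (rule mult_right_mono) (use e_bounds assms in auto)
  then have "y \<le> exp 1 * (y/2)" by simp
  then have "y \<le> exp (y/2)" using a by simp
  then have "y * y \<le> exp (y/2) * exp (y/2)" using assms by (intro mult_mono) auto
  also have "\<dots> = exp y" by (simp flip: exp_add)
  finally show "y^2 * exp (-y) \<le> 1" by (simp add: exp_minus field_simps power2_eq_square)
qed

lemma c_bound: "1 / (exp 1 - 1) \<le> 1 - 1 / exp (1::real)"
proof -
  have "exp 1 \<le> (exp 1 - 1) * (exp 1 - (1::real))"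
  proof -
    have "1.718 * 1.718 \<le> (exp 1 - 1) * (exp 1 - (1::real))"
      using e_bounds by (intro mult_mono) auto
    then show ?thesis using e_bounds by simp
  qed
  then show ?thesis using e_bounds by (simp add: field_simps)
qed

lemma real_bound:
  fixes n :: nat and s :: real
  assumes n: "n \<ge> 1" and s: "0 \<le> s" "s \<le> 1"
  defines "c \<equiv> 1 / (exp 1 - 1)" and "bb \<equiv> (exp 1 - 2) / (exp 1 - 1)"
  defines "a \<equiv> real n * c"
  shows "(bb * s + (a - bb) * (1 / real n ^ 2)) * (\<Sum>i<n. (1 - s) ^ i) \<le> 1 - 1 / exp 1 + 1 / real n"
proof -
  have e: "2.718 < exp (1::real)" "exp (1::real) < 2.7183" by (rule e_bounds)+
  have cpos: "0 < c" "0 < bb" unfolding c_def bb_def using e by auto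
  have bbc: "bb + c = 1" unfolding bb_def c_def using e by (simp add: field_simps)
  have bba: "bb \<le> a" unfolding bb_def a_def c_def using e n
    by (simp add: divide_right_mono)
  have nn: "real n \<ge> 1" using n by simp
  define S where "S = (\<Sum>i<n. (1 - s) ^ i)"
  have S0: "0 \<le> S" unfolding S_def using s by (auto intro!: sum_nonneg)
  define P where "P = (a - bb) * (1 / real n ^ 2)"
  have P0: "0 \<le> P" unfolding P_def using bba by simp
  have Pc: "P * real n \<le> c"
  proof -
    have "P * real n = (a - bb) / real n" unfolding P_def using nn by (simp add: power2_eq_square field_simps)
    also have "\<dots> \<le> a / real n" using cpos nn by (intro divide_right_mono) auto
    also have "\<dots> = c" unfolding a_def using nn by simp
    finally show ?thesis .
  qed
  have ce: "c \<le> 1 - 1 / exp 1" unfolding c_def by (rule c_bound)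
  have goal: "(bb * s + P) * S \<le> 1 - 1 / exp 1 + 1 / real n"
  proof (cases "s = 0")
    case True
    have "S = real n" unfolding S_def True by simp
    then have "(bb * s + P) * S = P * real n" using True by simp
    also have "\<dots> \<le> 1 - 1 / exp 1 + 1 / real n" using Pc ce nn by (smt (verit) divide_nonneg_nonneg of_nat_0_le_iff)
    finally show ?thesis .
  next
    case False
    then have spos: "0 < s" using s by simp
    define y where "y = real n * s"
    have ypos: "0 < y" unfolding y_def using spos nn by simp
    define u where "u = 1 - (1 - s) ^ n"
    have hu: "u = s * S" unfolding u_def S_def using one_diff_power_eq[of "1 - s" n] by simp
    have u0: "0 \<le> u" using hu spos S0 by simp
    have PS: "P * S = (P * real n) * u / y" unfolding y_def hu using spos nn by (simp add: field_simps)
    have "P * S \<le> c * u / y"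
      unfolding PS using Pc u0 ypos by (intro divide_right_mono mult_right_mono) auto
    then have T1: "(bb * s + P) * S \<le> (bb + c / y) * u"
      using hu by (simp add: algebra_simps)
    have "exp (- y) * (1 - y^2 / real n) \<le> (1 - s) ^ n"
      using pow_lower[OF s, of n] nn unfolding y_def by (simp add: power2_eq_square field_simps)
    then have u_le: "u \<le> (1 - exp (-y)) + y^2 * exp (-y) / real n"
      unfolding u_def by (simp add: algebra_simps)
    have bcy: "0 \<le> bb + c / y" using cpos ypos by simp
    have T2: "(bb + c / y) * u \<le> (bb + c / y) * (1 - exp (-y)) + (bb + c / y) * (y^2 * exp (-y) / real n)"
      using mult_left_mono[OF u_le bcy] by (simp add: algebra_simps)
    have F1: "(bb + c / y) * (1 - exp (-y)) \<le> 1 - 1 / exp 1"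
    proof -
      have G: "0 \<le> Gf y" using ypos by (intro G_nonneg) simp
      have k: "bb = (exp 1 - 2) * c" unfolding bb_def c_def by simp
      have eq: "(bb + c / y) * (1 - exp (-y)) = c * ((1 + (exp 1 - 2) * y) * (1 - exp (-y))) / y"
        unfolding k using ypos by (simp add: field_simps)
      have "(1 + (exp 1 - 2) * y) * (1 - exp (-y)) \<le> ((exp 1 - 2) + 1 / exp 1) * y"
        using G unfolding Gf_def by (simp add: algebra_simps)
      then have "c * ((1 + (exp 1 - 2) * y) * (1 - exp (-y))) / y \<le> c * (((exp 1 - 2) + 1 / exp 1) * y) / y"
        using cpos ypos by (intro divide_right_mono mult_left_mono) auto
      also have "\<dots> = 1 - 1 / exp 1" unfolding c_def using ypos e by (simp add: field_simps power2_eq_square)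
      finally show ?thesis unfolding eq .
    qed
    have F2: "(bb + c / y) * (y^2 * exp (-y) / real n) \<le> 1 / real n"
    proof -
      have "(bb + c / y) * (y^2 * exp (-y) / real n) = (bb * (y^2 * exp (-y)) + c * (y * exp (-y))) / real n"
        using ypos nn by (simp add: field_simps power2_eq_square)
      also have "\<dots> \<le> (bb * 1 + c * 1) / real n"
        using y_exp[of y] ypos cpos nn
        by (intro divide_right_mono add_mono mult_left_mono) auto
      finally show ?thesis using bbc by simp
    qed
    show ?thesis using T1 T2 F1 F2 by linarith
  qed
  show ?thesis using goal unfolding S_def P_def .
qed



lemma fin_hd: "finite (set_pmf (hard_dist n))"
  unfolding hard_dist_def by simp

lemma hd_exp:
  assumes "n \<ge> 1"
  shows "measure_pmf.expectation (hard_dist n) f =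
    f (real n / (exp 1 - 1)) * (1 / real n ^ 2) + f ((exp 1 - 2) / (exp 1 - 1)) * (1 - 1 / real n ^ 2)"
proof -
  have "0 \<le> 1 / real n ^ 2" "1 / real n ^ 2 \<le> 1" using assms by (auto simp: field_simps)
  then show ?thesis unfolding hard_dist_def by simp
qed

lemma pair_exp:
  fixes g :: "'a \<times> bool \<Rightarrow> real"
  assumes "finite (set_pmf D)" "0 \<le> \<theta>" "\<theta> \<le> 1"
  shows "measure_pmf.expectation (pair_pmf D (bernoulli_pmf \<theta>)) g =
     measure_pmf.expectation D (\<lambda>v. g (v, True) * \<theta> + g (v, False) * (1 - \<theta>))"
  unfolding pair_pmf_def using assms
  by (simp add: exp_bind)

lemma fta_bound:
  assumes n: "n \<ge> 1" and th: "0 \<le> \<theta>" "\<theta> \<le> 1"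
  shows "fta_value n (hard_dist n) \<tau> \<theta> \<le> 1 - 1 / exp 1 + 1 / real n"
proof -
  define q where "q = pair_pmf (hard_dist n) (bernoulli_pmf \<theta>)"
  have finq: "finite (set_pmf q)" unfolding q_def by (simp add: fin_hd)
  define a where "a = real n / (exp 1 - 1)"
  define lo where "lo = (exp 1 - 2) / (exp 1 - (1::real))"
  define p where "p = 1 / real n ^ 2"
  define \<iota> where "\<iota> x = (if acc \<tau> x then 1 else (0::real))" for x
  define A where "A = measure_pmf.expectation q (\<lambda>x. if acc \<tau> x then fst x else 0)"
  define s where "s = measure_pmf.expectation q (\<lambda>x. if acc \<tau> x then 1 else (0::real))"
  define X where "X = \<iota> (a, True) * \<theta> + \<iota> (a, False) * (1 - \<theta>)"
  define Y where "Y = \<iota> (lo, True) * \<theta> + \<iota> (lo, False) * (1 - \<theta>)"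
  have e: "2.718 < exp (1::real)" "exp (1::real) < 2.7183" by (rule e_bounds)+
  have nn: "real n \<ge> 1" using n by simp
  have p01: "0 \<le> p" "p \<le> 1" unfolding p_def using nn by (auto simp: field_simps)
  have loa: "lo \<le> a" unfolding lo_def a_def using e n by (simp add: divide_right_mono)
  have X01: "0 \<le> X" "X \<le> 1" unfolding X_def \<iota>_def using th by auto
  have Y01: "0 \<le> Y" "Y \<le> 1" unfolding Y_def \<iota>_def using th by auto
  have sX: "s = X * p + Y * (1 - p)"
    unfolding s_def q_def using th n
    by (simp add: pair_exp fin_hd hd_exp X_def Y_def \<iota>_def a_def lo_def p_def)
  have "A = measure_pmf.expectation q (\<lambda>x. fst x * \<iota> x)"
    unfolding A_def \<iota>_def by (intro Bochner_Integration.integral_cong) auto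
  also have "\<dots> = a * X * p + lo * Y * (1 - p)"
    unfolding q_def using th n
    by (simp add: pair_exp fin_hd hd_exp X_def Y_def a_def lo_def p_def algebra_simps)
  finally have AX: "A = a * X * p + lo * Y * (1 - p)" .
  have s01: "0 \<le> s" "s \<le> 1"
  proof -
    have h1: "X * p \<le> p" using X01 p01 by (simp add: mult_left_le_one_le)
    have h2: "Y * (1 - p) \<le> 1 - p" using Y01 p01 by (simp add: mult_left_le_one_le)
    note h1 h2
    moreover have "0 \<le> X * p" "0 \<le> Y * (1 - p)" using X01 Y01 p01 by simp_all
    ultimately show "0 \<le> s" "s \<le> 1" unfolding sX by linarith+
  qed
  have Ab: "A \<le> lo * s + (a - lo) * p"
  proof -
    have "(a - lo) * p * X \<le> (a - lo) * p * 1"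
      using loa p01 X01 by (intro mult_left_mono) auto
    then show ?thesis unfolding AX sX by (simp add: algebra_simps)
  qed
  have S0: "0 \<le> (\<Sum>i<n. (1 - s) ^ i)" using s01 by (auto intro!: sum_nonneg)
  have "fta_value n (hard_dist n) \<tau> \<theta> = A * (\<Sum>i<n. (1 - s) ^ i)"
    unfolding fta_value_def sample_pmf_def A_def s_def q_def[symmetric]
    by (rule fta_exp[OF finq])
  also have "\<dots> \<le> (lo * s + (a - lo) * p) * (\<Sum>i<n. (1 - s) ^ i)"
    by (rule mult_right_mono[OF Ab S0])
  also have "\<dots> \<le> 1 - 1 / exp 1 + 1 / real n"
    using real_bound[OF n s01] unfolding a_def lo_def p_def by simp
  finally show ?thesis .
qed


lemma max_bound:
  assumes n: "n \<ge> 1"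
  shows "real n / (real n + 1) \<le> exp_max n (hard_dist n)"
proof -
  define a where "a = real n / (exp 1 - 1)"
  define lo where "lo = (exp 1 - 2) / (exp 1 - (1::real))"
  define p where "p = 1 / real n ^ 2"
  have e: "2.718 < exp (1::real)" "exp (1::real) < 2.7183" by (rule e_bounds)+
  have nn: "real n \<ge> 1" using n by simp
  have p01: "0 \<le> p" "p \<le> 1" unfolding p_def using nn by (auto simp: field_simps)
  have lo_le: "lo \<le> a" unfolding lo_def a_def using e n by (simp add: divide_right_mono)
  define L where "L vs = (if a \<in> set vs then a else lo)" for vs
  have EL: "measure_pmf.expectation (iid_list_pmf m (hard_dist n)) L = a - (a - lo) * (1 - p) ^ m" for m
  proof (induction m)
    case 0 then show ?case by (simp add: L_def)
  next
    case (Suc m)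
    have ne: "lo \<noteq> a"
    proof -
      have "exp 1 - 2 < real n" using e nn by simp
      then have "lo < a" unfolding lo_def a_def using e by (intro divide_strict_right_mono) auto
      then show ?thesis by simp
    qed
    have "measure_pmf.expectation (iid_list_pmf (Suc m) (hard_dist n)) L
        = a * p + measure_pmf.expectation (iid_list_pmf m (hard_dist n)) L * (1 - p)"
      unfolding exp_iid_Suc[OF fin_hd] hd_exp[OF n, folded a_def lo_def p_def]
      using ne by (simp add: L_def[abs_def])
    also have "\<dots> = a - (a - lo) * (1 - p) ^ Suc m" unfolding Suc by (simp add: algebra_simps)
    finally show ?case .
  qed
  have "measure_pmf.expectation (iid_list_pmf n (hard_dist n)) L
      \<le> exp_max n (hard_dist n)"
    unfolding exp_max_def
  proof (rule integral_mono_AE[OF integrable_measure_pmf_finite integrable_measure_pmf_finite AE_pmfI])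
    show "finite (set_pmf (iid_list_pmf n (hard_dist n)))" by (rule finite_iid[OF fin_hd])
    show "finite (set_pmf (iid_list_pmf n (hard_dist n)))" by (rule finite_iid[OF fin_hd])
    fix vs assume "vs \<in> set_pmf (iid_list_pmf n (hard_dist n))"
    then have vs: "set vs \<subseteq> set_pmf (hard_dist n)" "length vs = n" using set_iid by blast+
    have sub: "set vs \<subseteq> {a, lo}" using vs(1) unfolding hard_dist_def a_def lo_def by auto
    have nem: "vs \<noteq> []" using vs(2) n by auto
    show "L vs \<le> Max (set vs)"
    proof (cases "a \<in> set vs")
      case True then show ?thesis unfolding L_def by simp
    next
      case False
      then have "lo \<in> set vs" using sub nem by (cases vs) auto
      then show ?thesis using False unfolding L_def by simp
    qed
  qed
  moreover have "(1 - p) ^ n \<le> real n / (real n + 1)"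
  proof -
    have b1: "1 + real n * p \<le> (1 + p) ^ n" using Bernoulli_inequality[of p n] p01 by simp
    have b2: "(1 - p) ^ n * (1 + p) ^ n \<le> 1"
    proof -
      have "(1 - p) ^ n * (1 + p) ^ n = (1 - p^2) ^ n" by (simp add: power_mult_distrib[symmetric] power2_eq_square algebra_simps)
      also have "\<dots> \<le> 1" using p01 by (intro power_le_one) (auto simp: power_le_one)
      finally show ?thesis .
    qed
    have np: "1 + real n * p = (real n + 1) / real n" unfolding p_def using nn by (simp add: field_simps power2_eq_square)
    have "(1 - p) ^ n * ((real n + 1) / real n) \<le> 1"
      using b2 b1 np p01 by (smt (verit) mult_left_mono zero_le_power)
    then show ?thesis using nn by (simp add: field_simps)
  qed
  moreover have "a - (a - lo) * (real n / (real n + 1)) = real n / (real n + 1)"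
  proof -
    have d: "exp 1 - 1 \<noteq> (0::real)" using e by simp
    have "a + lo * real n = ((exp 1 - 2) * real n + real n) / (exp 1 - 1)"
      unfolding a_def lo_def by (simp add: add_divide_distrib)
    also have "(exp 1 - 2) * real n + real n = (exp 1 - 1) * real n" by (simp add: algebra_simps)
    finally have al: "a + lo * real n = real n" using d by simp
    have "a - (a - lo) * (real n / (real n + 1)) = (a * (real n + 1) - (a - lo) * real n) / (real n + 1)"
      using nn by (simp add: field_simps)
    also have "a * (real n + 1) - (a - lo) * real n = a + lo * real n" by (simp add: algebra_simps)
    finally show ?thesis using al by simp
  qed
  moreover have "(a - lo) * (1 - p) ^ n \<le> (a - lo) * (real n / (real n + 1))"
    using lo_le by (intro mult_left_mono) (auto simp: calculation)
  ultimately show ?thesis using EL[of n] by linarith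
qed

theorem theorem5:
  shows "\<exists>C::real. \<forall>n::nat. n \<ge> 1 \<longrightarrow>
    (set_pmf (hard_dist n) \<subseteq> {0..} \<and>
     (\<forall>\<tau> \<theta>::real. 0 \<le> \<theta> \<and> \<theta> \<le> 1 \<longrightarrow>
        fta_value n (hard_dist n) \<tau> \<theta>
          \<le> (1 - 1 / exp 1 + C / real n) * exp_max n (hard_dist n)))"
proof (intro exI[of _ 4] allI impI conjI)
  fix n :: nat assume n: "n \<ge> 1"
  have e: "2.718 < exp (1::real)" "exp (1::real) < 2.7183" by (rule e_bounds)+
  show "set_pmf (hard_dist n) \<subseteq> {0..}" unfolding hard_dist_def using e by auto
  fix \<tau> \<theta> :: real assume th: "0 \<le> \<theta> \<and> \<theta> \<le> 1"
  have nn: "real n \<ge> 1" using n by simp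
  define g where "g = 1 - 1 / exp 1 + 4 / real n"
  have g0: "0 \<le> g" unfolding g_def using e by (simp add: add_nonneg_nonneg)
  have "fta_value n (hard_dist n) \<tau> \<theta> \<le> 1 - 1 / exp 1 + 1 / real n"
    using fta_bound[OF n] th by simp
  also have "\<dots> \<le> g * (real n / (real n + 1))"
  proof -
    define t where "t = 1 / exp (1::real)"
    have t0: "0 \<le> t" unfolding t_def by simp
    have "(1 - t + 1 / real n) * (real n + 1) = (1 - t) * real n + (1 - t) + 1 + 1 / real n"
      using nn by (simp add: field_simps)
    moreover have "g * real n = (1 - t) * real n + 4" unfolding g_def t_def using nn by (simp add: field_simps)
    moreover have "1 / real n \<le> 1" using nn by simp
    ultimately have "(1 - t + 1 / real n) * (real n + 1) \<le> g * real n" using t0 by linarith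
    then have "1 - t + 1 / real n \<le> g * real n / (real n + 1)" using nn by (simp add: le_divide_eq)
    then show ?thesis unfolding t_def by simp
  qed
  also have "\<dots> \<le> g * exp_max n (hard_dist n)" by (rule mult_left_mono[OF max_bound[OF n] g0])
  finally show "fta_value n (hard_dist n) \<tau> \<theta> \<le> (1 - 1 / exp 1 + 4 / real n) * exp_max n (hard_dist n)"
    unfolding g_def .
qed


end
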